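(* Let $B$ be a finite Blaschke product of degree $n\ge1$ and $\lambda\in\mathbb T$. Then the equation $zB(z)=\lambda$ has exactly $n+1$ distinct solutions $z_0,\dots,z_n$, all lying on $\mathbb T$, and \[ \sum_{j=0}^n\frac{1}{|B'(z_j)|+1}=1 . \]
   Context: A finite Blaschke product of degree $n$ is $B(z)=\alpha\prod_{k=1}^n \frac{z-a_k}{1-\overline{a_k}z}$ with $a_k\in\mathbb D=\{|z|<1\}$, $\alpha\in\mathbb T=\{|z|=1\}$. *)

theory Defs
  imports "HOL-Analysis.Analysis"
begin

text \<open>Finite Blaschke product with unimodular constant \<alpha> and zeros given by the list as
  (listed with multiplicity; the degree is the length of the list):
  B(z) = \<alpha> * prod_k (z - a_k) / (1 - conj(a_k) z).\<close>
definition blaschke :: "complex \<Rightarrow> complex list \<Rightarrow> complex \<Rightarrow> complex" where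
  "blaschke \<alpha> as z = \<alpha> * (\<Prod>a\<leftarrow>as. (z - a) / (1 - cnj a * z))"

end

theory Submission imports Defs "HOL-Computational_Algebra.Fundamental_Theorem_Algebra" begin


lemma pderiv_prod_lin_at:
  fixes Z :: "complex set"
  assumes "finite Z" "z \<in> Z"
  shows "poly (pderiv (\<Prod>w\<in>Z. [:-w,1:])) z = (\<Prod>w\<in>Z-{z}. z - w)"
proof -
  have "poly (pderiv (\<Prod>w\<in>Z. [:-w,1:])) z = (\<Sum>a\<in>Z. \<Prod>w\<in>Z-{a}. z - w)"
    by (simp add: pderiv_prod poly_sum poly_prod pderiv_pCons)
  also have "\<dots> = (\<Prod>w\<in>Z-{z}. z - w) + (\<Sum>a\<in>Z-{z}. \<Prod>w\<in>Z-{a}. z - w)"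
    by (rule sum.remove[OF assms])
  also have "(\<Sum>a\<in>Z-{z}. \<Prod>w\<in>Z-{a}. z - w) = 0"
  proof (rule sum.neutral, rule ballI)
    fix a assume "a \<in> Z-{z}"
    then show "(\<Prod>w\<in>Z-{a}. z - w) = 0"
      using assms by (intro prod_zero) auto
  qed
  finally show ?thesis by simp
qed

lemma lagrange_sum:
  fixes Z :: "complex set" and T :: "complex poly"
  assumes fin: "finite Z" and card: "card Z = Suc k" and deg: "degree T \<le> k"
  shows "(\<Sum>z\<in>Z. poly T z / poly (pderiv (\<Prod>w\<in>Z. [:-w,1:])) z) = coeff T k"
proof -
  define d where "d z = (\<Prod>w\<in>Z-{z}. z - w)" for z
  define M where "M z = (\<Prod>w\<in>Z-{z}. [:-w,1::complex:])" for z
  have dnz: "d z \<noteq> 0" if "z \<in> Z" for z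
    using fin unfolding d_def by (subst prod_zero_iff) auto
  have degM: "degree (M z) = k" if "z \<in> Z" for z
    using that fin card unfolding M_def by (subst degree_prod_sum_eq) auto
  have lcM: "coeff (M z) k = 1" if "z \<in> Z" for z
    using lead_coeff_prod[of "\<lambda>w. [:-w,1::complex:]" "Z-{z}"] degM[OF that]
    unfolding M_def by simp
  have polyM: "poly (M z) y = (if y = z then d z else 0)" if "z \<in> Z" "y \<in> Z" for z y
    using that fin unfolding M_def d_def poly_prod
    by (auto intro!: prod_zero)
  define L where "L = (\<Sum>z\<in>Z. smult (poly T z / d z) (M z))"
  have "L = T"
  proof (rule poly_eqI_degree[of Z])
    fix y assume y: "y \<in> Z"
    have "poly L y = (\<Sum>z\<in>Z. poly T z / d z * poly (M z) y)"
      unfolding L_def by (simp add: poly_sum)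
    also have "\<dots> = poly T y / d y * poly (M y) y"
      using y fin by (subst sum.remove[of _ y]) (auto simp: polyM split: if_splits intro!: sum.neutral)
    also have "\<dots> = poly T y" using y dnz polyM by simp
    finally show "poly L y = poly T y" .
  next
    have "degree L \<le> k" unfolding L_def
      using fin by (intro degree_sum_le) (auto intro: order.trans[OF degree_smult_le] simp: degM)
    then show "degree L < card Z" using card by simp
  next
    show "degree T < card Z" using card deg by simp
  qed
  then have "coeff T k = coeff L k" by simp
  also have "\<dots> = (\<Sum>z\<in>Z. poly T z / d z * coeff (M z) k)"
    unfolding L_def by (simp add: coeff_sum)
  also have "\<dots> = (\<Sum>z\<in>Z. poly T z / d z)"
    by (rule sum.cong) (auto simp: lcM)
  finally have "coeff T k = (\<Sum>z\<in>Z. poly T z / d z)" .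
  moreover have "poly (pderiv (\<Prod>w\<in>Z. [:-w,1:])) z = d z" if "z \<in> Z" for z
    using pderiv_prod_lin_at[OF fin that] unfolding d_def .
  ultimately show ?thesis by simp
qed



definition bP :: "complex list \<Rightarrow> complex poly" where
  "bP as = (\<Prod>a\<leftarrow>as. [:-a,1:])"
definition bQ :: "complex list \<Rightarrow> complex poly" where
  "bQ as = (\<Prod>a\<leftarrow>as. [:1,-cnj a:])"

lemma prod_list_div: "(\<Prod>a\<leftarrow>as. f a / (g a :: complex)) = (\<Prod>a\<leftarrow>as. f a) / (\<Prod>a\<leftarrow>as. g a)"
  by (induction as) auto

lemma poly_bP: "poly (bP as) z = (\<Prod>a\<leftarrow>as. z - a)"
  unfolding bP_def by (induction as) (auto simp: algebra_simps)

lemma poly_bQ: "poly (bQ as) z = (\<Prod>a\<leftarrow>as. 1 - cnj a * z)"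
  unfolding bQ_def by (induction as) (auto simp: algebra_simps)

lemma blaschke_poly: "blaschke \<alpha> as z = \<alpha> * poly (bP as) z / poly (bQ as) z"
  unfolding blaschke_def poly_bP poly_bQ prod_list_div by simp

lemma blaschke_fun: "blaschke \<alpha> as = (\<lambda>z. \<alpha> * poly (bP as) z / poly (bQ as) z)"
  using blaschke_poly by blast

lemma bP_monic: "lead_coeff (bP as) = 1 \<and> degree (bP as) = length as"
  unfolding bP_def
proof (induction as)
  case (Cons a as)
  let ?X = "\<Prod>a\<leftarrow>as. [:-a,1::complex:]"
  have nz: "?X \<noteq> 0" using Cons by auto
  have "(\<Prod>a\<leftarrow>a#as. [:-a,1::complex:]) = [:-a,1:] * ?X" by simp
  moreover have "lead_coeff ([:-a,1:] * ?X) = 1"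
  proof -
    have lc: "lead_coeff ?X = 1" using Cons by blast
    have "lead_coeff ([:-a,1:] * ?X) = lead_coeff [:-a,1::complex:] * lead_coeff ?X"
      by (rule lead_coeff_mult)
    also have "lead_coeff [:-a,1::complex:] = 1" by simp
    finally show ?thesis using lc by simp
  qed
  moreover have "degree ([:-a,1:] * ?X) = Suc (length as)"
    using Cons nz by (subst degree_mult_eq) auto
  ultimately show ?case by simp
qed simp

lemma bQ_deg: "degree (bQ as) \<le> length as"
proof (induction as)
  case (Cons a as)
  have "degree (bQ (a#as)) \<le> degree [:1,-cnj a:] + degree (bQ as)"
    unfolding bQ_def by (simp only: list.map prod_list.Cons) (rule degree_mult_le)
  also have "\<dots> \<le> 1 + length as" using Cons by (intro add_mono) auto
  finally show ?case by simp
qed (simp add: bQ_def)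

lemma bQ_0: "poly (bQ as) 0 = 1"
  unfolding poly_bQ by (induction as) auto

lemma prod_list_zero_iff_c: "(\<Prod>a\<leftarrow>as. f a) = (0::complex) \<longleftrightarrow> (\<exists>a\<in>set as. f a = 0)"
  by (induction as) auto

lemma bQ_nz:
  assumes "\<forall>a\<in>set as. norm a < 1" "norm z \<le> 1"
  shows "poly (bQ as) z \<noteq> 0"
proof -
  have "1 - cnj a * z \<noteq> 0" if "a \<in> set as" for a
  proof
    assume "1 - cnj a * z = 0"
    then have "cnj a * z = 1" by simp
    then have "norm a * norm z = 1" by (metis complex_mod_cnj norm_mult norm_one)
    moreover have "norm a * norm z < 1"
    proof -
      have "norm a * norm z \<le> norm a * 1" by (rule mult_left_mono) (use assms in auto)
      also have "\<dots> < 1" using assms that by simp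
      finally show ?thesis .
    qed
    ultimately show False by simp
  qed
  then show ?thesis unfolding poly_bQ prod_list_zero_iff_c by auto
qed

lemma norm_identity:
  "(cmod (z - a))\<^sup>2 - (cmod (1 - cnj a * z))\<^sup>2 = ((cmod z)\<^sup>2 - 1) * (1 - (cmod a)\<^sup>2)"
proof -
  have "complex_of_real ((cmod (z - a))\<^sup>2 - (cmod (1 - cnj a * z))\<^sup>2) =
        complex_of_real (((cmod z)\<^sup>2 - 1) * (1 - (cmod a)\<^sup>2))"
    by (simp only: of_real_diff of_real_mult of_real_1 complex_norm_square)
       (simp add: algebra_simps)
  then show ?thesis using of_real_eq_iff by blast
qed

lemma norm_factor_le:
  assumes "norm a < 1" "norm z \<le> 1"
  shows "cmod (z - a) \<le> cmod (1 - cnj a * z)"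
proof -
  have "(cmod z)\<^sup>2 \<le> 1" using assms by (simp add: power_le_one)
  moreover have "(cmod a)\<^sup>2 < 1" using assms by (simp add: power_less_one_iff)
  ultimately have "(cmod (z - a))\<^sup>2 \<le> (cmod (1 - cnj a * z))\<^sup>2"
    using norm_identity[of z a] by (smt (verit) mult_nonneg_nonneg mult_nonpos_nonneg)
  then show ?thesis by (simp add: power2_le_iff_abs_le abs_le_square_iff)
qed

lemma norm_factor_ge:
  assumes "norm a < 1" "norm z \<ge> 1"
  shows "cmod (z - a) \<ge> cmod (1 - cnj a * z)"
proof -
  have "(cmod z)\<^sup>2 \<ge> 1" using assms by (simp add: one_le_power)
  moreover have "(cmod a)\<^sup>2 < 1" using assms by (simp add: power_less_one_iff)
  ultimately have "(cmod (z - a))\<^sup>2 \<ge> (cmod (1 - cnj a * z))\<^sup>2"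
    using norm_identity[of z a] by (smt (verit) mult_nonneg_nonneg)
  then show ?thesis by (simp add: abs_le_square_iff)
qed

lemma prod_list_mono_r:
  assumes "\<forall>a\<in>set as. 0 \<le> f a \<and> f a \<le> (g a :: real)"
  shows "(\<Prod>a\<leftarrow>as. f a) \<le> (\<Prod>a\<leftarrow>as. g a)"
  using assms
proof (induction as)
  case (Cons a as)
  have h: "0 \<le> f a" "f a \<le> g a" using Cons.prems by auto
  have h2: "(\<Prod>a\<leftarrow>as. f a) \<le> (\<Prod>a\<leftarrow>as. g a)" using Cons by auto
  have h3: "0 \<le> (\<Prod>a\<leftarrow>as. f a)" using Cons.prems by (intro prod_list_nonneg) auto
  show ?case using mult_mono[OF h(2) h2 order.trans[OF h] h3] by simp
qed simp

lemma norm_prod_list_c: "norm (\<Prod>a\<leftarrow>as. f a :: complex) = (\<Prod>a\<leftarrow>as. norm (f a))"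
  by (induction as) (auto simp: norm_mult)

lemma aux_mult: "u \<noteq> 0 \<Longrightarrow> v \<noteq> 0 \<Longrightarrow>
  c / v^2 * B + u / v * (B * S) = u / v * B * (c / (u * v) + (S::complex))"
  by (simp add: field_simps power2_eq_square)

lemma blaschke_deriv:
  assumes "\<forall>a\<in>set as. z \<noteq> a \<and> 1 - cnj a * z \<noteq> 0"
  shows "(blaschke \<alpha> as has_field_derivative
     blaschke \<alpha> as z * (\<Sum>a\<leftarrow>as. (1 - cnj a * a) / ((z - a) * (1 - cnj a * z)))) (at z)"
  using assms
proof (induction as)
  case Nil
  have "blaschke \<alpha> [] = (\<lambda>z. \<alpha>)" by (auto simp: blaschke_def)
  then show ?case by simp
next
  case (Cons a as)
  have eq: "blaschke \<alpha> (a#as) = (\<lambda>w. (w - a) / (1 - cnj a * w) * blaschke \<alpha> as w)"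
    by (auto simp: blaschke_def)
  have d1: "z - a \<noteq> 0" "1 - cnj a * z \<noteq> 0" using Cons.prems by auto
  have g: "((\<lambda>w. (w - a) / (1 - cnj a * w)) has_field_derivative
           (1 - cnj a * a) / (1 - cnj a * z)^2) (at z)"
    using d1 by (auto intro!: derivative_eq_intros simp: field_simps power2_eq_square)
  have "((\<lambda>w. (w - a) / (1 - cnj a * w) * blaschke \<alpha> as w) has_field_derivative
     (1 - cnj a * a) / (1 - cnj a * z)^2 * blaschke \<alpha> as z + (z - a) / (1 - cnj a * z) *
     (blaschke \<alpha> as z * (\<Sum>a\<leftarrow>as. (1 - cnj a * a) / ((z - a) * (1 - cnj a * z))))) (at z)"
  proof -
    have IH: "(blaschke \<alpha> as has_field_derivative
       blaschke \<alpha> as z * (\<Sum>a\<leftarrow>as. (1 - cnj a * a) / ((z - a) * (1 - cnj a * z)))) (at z)"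
      using Cons by auto
    show ?thesis using DERIV_mult[OF g IH] by (simp add: mult.commute)
  qed
  moreover have "(1 - cnj a * a) / (1 - cnj a * z)^2 * blaschke \<alpha> as z + (z - a) / (1 - cnj a * z) *
     (blaschke \<alpha> as z * (\<Sum>a\<leftarrow>as. (1 - cnj a * a) / ((z - a) * (1 - cnj a * z)))) =
     blaschke \<alpha> (a#as) z * (\<Sum>a\<leftarrow>a#as. (1 - cnj a * a) / ((z - a) * (1 - cnj a * z)))"
  proof -
    have e1: "blaschke \<alpha> (a#as) z = (z - a) / (1 - cnj a * z) * blaschke \<alpha> as z" by (simp add: eq)
    have e2: "(\<Sum>a\<leftarrow>a#as. (1 - cnj a * a) / ((z - a) * (1 - cnj a * z))) =
       (1 - cnj a * a) / ((z - a) * (1 - cnj a * z)) + (\<Sum>a\<leftarrow>as. (1 - cnj a * a) / ((z - a) * (1 - cnj a * z)))"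
      by simp
    show ?thesis unfolding e1 e2 by (rule aux_mult[OF d1])
  qed
  ultimately show ?case unfolding eq by (rule DERIV_cong)
qed

lemma aux_div: "z \<noteq> 0 \<Longrightarrow> z * (X / (Y * (z * W))) = X / (Y * (W::complex))"
  by (cases "Y * W = 0") (auto simp: field_simps)

lemma term_on_circle:
  assumes "norm z = 1" "z \<noteq> a"
  shows "z * ((1 - cnj a * a) / ((z - a) * (1 - cnj a * z))) =
         complex_of_real ((1 - (cmod a)\<^sup>2) / (cmod (z - a))\<^sup>2)"
proof -
  have zz: "z * cnj z = 1" using assms complex_norm_square[of z] by simp
  have e1: "1 - cnj a * z = z * cnj (z - a)" using zz by (simp add: algebra_simps)
  have e2: "(z - a) * cnj (z - a) = complex_of_real ((cmod (z - a))\<^sup>2)"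
    by (rule complex_norm_square[symmetric])
  have e3: "1 - cnj a * a = complex_of_real (1 - (cmod a)\<^sup>2)"
    using complex_norm_square[of a] by (simp add: mult.commute)
  have nz: "z \<noteq> 0" "cnj (z - a) \<noteq> 0" using assms by auto
  have "z * ((1 - cnj a * a) / ((z - a) * (1 - cnj a * z))) =
        (1 - cnj a * a) / ((z - a) * cnj (z - a))"
    unfolding e1 using nz(1) by (rule aux_div)
  also have "\<dots> = complex_of_real ((1 - (cmod a)\<^sup>2) / (cmod (z - a))\<^sup>2)"
    unfolding e2 e3 by simp
  finally show ?thesis .
qed

lemma sum_on_circle:
  assumes "norm z = 1" "\<forall>a\<in>set as. z \<noteq> a"
  shows "z * (\<Sum>a\<leftarrow>as. (1 - cnj a * a) / ((z - a) * (1 - cnj a * z))) =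
         complex_of_real (\<Sum>a\<leftarrow>as. (1 - (cmod a)\<^sup>2) / (cmod (z - a))\<^sup>2)"
  using assms
proof (induction as)
  case (Cons a as)
  have "z * (\<Sum>a\<leftarrow>a#as. (1 - cnj a * a) / ((z - a) * (1 - cnj a * z))) =
        z * ((1 - cnj a * a) / ((z - a) * (1 - cnj a * z))) +
        z * (\<Sum>a\<leftarrow>as. (1 - cnj a * a) / ((z - a) * (1 - cnj a * z)))"
    by (simp add: distrib_left)
  also have "\<dots> = complex_of_real ((1 - (cmod a)\<^sup>2) / (cmod (z - a))\<^sup>2) +
       complex_of_real (\<Sum>a\<leftarrow>as. (1 - (cmod a)\<^sup>2) / (cmod (z - a))\<^sup>2)"
    using Cons term_on_circle[of z a] by simp
  finally show ?case by simp
qed simp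

lemma key_algebra:
  fixes p q p' q' z \<alpha> s :: complex
  assumes "q \<noteq> 0" "p \<noteq> 0" "z \<noteq> 0" "\<alpha> \<noteq> 0"
    and "\<alpha> * p / q * s = \<alpha> * (p' * q - p * q') / q^2"
  shows "z * (\<alpha> * p + \<alpha> * z * p' - (\<alpha> * z * p / q) * q') = (\<alpha> * z * p / q) * q * (1 + z * s)"
proof -
  have c: "\<alpha> * p / q \<noteq> 0" using assms by simp
  have s: "s = (\<alpha> * (p' * q - p * q') / q^2) / (\<alpha> * p / q)"
  proof -
    have "s = (\<alpha> * p / q * s) / (\<alpha> * p / q)" using c by (metis nonzero_mult_div_cancel_left)
    then show ?thesis by (simp only: assms(5))
  qed
  have s2: "s = (p' * q - p * q') / (p * q)"
    unfolding s using assms(1-4) by (simp add: power2_eq_square)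
  show ?thesis unfolding s2 using assms(1-4) by (simp add: field_simps)
qed


theorem mainTheorem6:
  fixes \<alpha> lam :: complex and as :: "complex list" and n :: nat
  assumes "norm \<alpha> = 1"
    and "\<forall>a\<in>set as. norm a < 1"
    and "length as = n" and "n \<ge> 1"
    and "norm lam = 1"
  shows "card {z. z * blaschke \<alpha> as z = lam} = n + 1
     \<and> {z. z * blaschke \<alpha> as z = lam} \<subseteq> sphere 0 1
     \<and> (\<Sum>z\<in>{z. z * blaschke \<alpha> as z = lam}.
          1 / (norm (deriv (blaschke \<alpha> as) z) + 1)) = 1"
proof -
  note asm = assms
  define B where "B = blaschke \<alpha> as"
  define P where "P = bP as"
  define Q where "Q = bQ as"
  define R where "R = smult \<alpha> (pCons 0 P) - smult lam Q"
  have a0: "\<alpha> \<noteq> 0" and l0: "lam \<noteq> 0" using asm by auto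
  have polyR: "poly R z = \<alpha> * z * poly P z - lam * poly Q z" for z
    by (simp add: R_def)
  have Bfun: "B = (\<lambda>z. \<alpha> * poly P z / poly Q z)"
    unfolding B_def P_def Q_def by (rule blaschke_fun)
  have Q0: "poly Q 0 = 1" unfolding Q_def by (rule bQ_0)
  have R0: "poly R 0 = - lam" by (simp add: polyR Q0)
  have Rnz: "R \<noteq> 0" using R0 l0 by auto
  have Qnz: "norm z \<le> 1 \<Longrightarrow> poly Q z \<noteq> 0" for z
    unfolding Q_def using bQ_nz asm(2) by blast
  have Pz: "poly P z = 0 \<Longrightarrow> z \<in> set as" for z
    unfolding P_def poly_bP prod_list_zero_iff_c by auto
  have rootQ: "poly Q z \<noteq> 0" if "poly R z = 0" for z
  proof
    assume q: "poly Q z = 0"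
    then have "\<alpha> * z * poly P z = 0" using that by (simp add: polyR)
    then have "z = 0 \<or> poly P z = 0" using a0 by simp
    then show False
    proof
      assume "z = 0" then show False using q Q0 by simp
    next
      assume "poly P z = 0"
      then have "z \<in> set as" by (rule Pz)
      then have "norm z \<le> 1" using asm(2) by auto
      then show False using Qnz q by blast
    qed
  qed
  have Seq: "{z. z * B z = lam} = {z. poly R z = 0}"
  proof (intro set_eqI iffI; simp)
    fix z assume h: "z * B z = lam"
    have q: "poly Q z \<noteq> 0"
    proof
      assume "poly Q z = 0"
      then have "B z = 0" by (simp add: Bfun)
      then show False using h l0 by simp
    qed
    from h have "z * (\<alpha> * poly P z / poly Q z) = lam" by (simp add: Bfun)
    then show "poly R z = 0" using q by (simp add: polyR field_simps)
  next
    fix z assume h: "poly R z = 0"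
    have q: "poly Q z \<noteq> 0" by (rule rootQ[OF h])
    from h have "\<alpha> * z * poly P z = lam * poly Q z" by (simp add: polyR)
    then show "z * B z = lam" using q by (simp add: Bfun field_simps)
  qed
  have circ: "norm z = 1" if h: "poly R z = 0" for z
  proof -
    have q: "poly Q z \<noteq> 0" by (rule rootQ[OF h])
    from h have "\<alpha> * z * poly P z = lam * poly Q z" by (simp add: polyR)
    then have "norm (\<alpha> * z * poly P z) = norm (lam * poly Q z)" by simp
    then have eqn: "norm z * norm (poly P z) = norm (poly Q z)"
      using asm(1,5) by (simp add: norm_mult)
    have nP: "norm (poly P z) = (\<Prod>a\<leftarrow>as. cmod (z - a))"
      unfolding P_def poly_bP norm_prod_list_c ..
    have nQ: "norm (poly Q z) = (\<Prod>a\<leftarrow>as. cmod (1 - cnj a * z))"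
      unfolding Q_def poly_bQ norm_prod_list_c ..
    have Qpos: "norm (poly Q z) > 0" using q by simp
    show ?thesis
    proof (rule ccontr)
      assume "norm z \<noteq> 1"
      then consider "norm z < 1" | "norm z > 1" by linarith
      then show False
      proof cases
        case 1
        have "norm (poly P z) \<le> norm (poly Q z)"
          unfolding nP nQ using asm(2) 1
          by (intro prod_list_mono_r) (auto intro: norm_factor_le)
        then have "norm z * norm (poly P z) \<le> norm z * norm (poly Q z)"
          by (intro mult_left_mono) auto
        also have "\<dots> < norm (poly Q z)" using 1 Qpos by simp
        finally show False using eqn by simp
      next
        case 2
        have ge: "norm (poly P z) \<ge> norm (poly Q z)"
          unfolding nP nQ using asm(2) 2
          by (intro prod_list_mono_r) (auto intro: norm_factor_ge)
        then have "norm (poly P z) > 0" using Qpos by linarith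
        then have "norm z * norm (poly P z) > 1 * norm (poly P z)"
          using 2 by (intro mult_strict_right_mono) auto
        then show False using eqn ge by simp
      qed
    qed
  qed
  define s where "s z = (\<Sum>a\<leftarrow>as. (1 - cnj a * a) / ((z - a) * (1 - cnj a * z)))" for z
  define c where "c z = (\<Sum>a\<leftarrow>as. (1 - (cmod a)\<^sup>2) / (cmod (z - a))\<^sup>2)" for z
  have atroot: "norm (deriv B z) = c z \<and> c z \<ge> 0 \<and>
      z * poly (pderiv R) z = lam * poly Q z * (1 + complex_of_real (c z))"
    if h: "poly R z = 0" for z
  proof -
    have z1: "norm z = 1" by (rule circ[OF h])
    have q: "poly Q z \<noteq> 0" by (rule rootQ[OF h])
    have za: "\<forall>a\<in>set as. z \<noteq> a" using asm(2) z1 by auto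
    have den: "\<forall>a\<in>set as. z \<noteq> a \<and> 1 - cnj a * z \<noteq> 0"
      using za q unfolding Q_def poly_bQ prod_list_zero_iff_c by auto
    have p: "poly P z \<noteq> 0" using Pz za by auto
    have z0: "z \<noteq> 0" using z1 by auto
    have D: "(B has_field_derivative B z * s z) (at z)"
      unfolding B_def s_def by (rule blaschke_deriv[OF den])
    have D2: "(B has_field_derivative
        \<alpha> * (poly (pderiv P) z * poly Q z - poly P z * poly (pderiv Q) z) / (poly Q z)^2) (at z)"
      unfolding Bfun
      by (rule DERIV_cong[OF DERIV_divide[OF DERIV_cmult[OF poly_DERIV] poly_DERIV]])
         (use q in \<open>auto simp: power2_eq_square algebra_simps\<close>)
    have eqd: "\<alpha> * poly P z / poly Q z * s z =
        \<alpha> * (poly (pderiv P) z * poly Q z - poly P z * poly (pderiv Q) z) / (poly Q z)^2"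
      using DERIV_unique[OF D D2] by (simp add: Bfun)
    have lam_eq: "lam = \<alpha> * z * poly P z / poly Q z"
      using h q by (simp add: polyR field_simps)
    have pR: "poly (pderiv R) z = \<alpha> * poly P z + \<alpha> * z * poly (pderiv P) z - lam * poly (pderiv Q) z"
      by (simp add: R_def pderiv_diff pderiv_smult pderiv_pCons algebra_simps)
    have zs: "z * s z = complex_of_real (c z)"
      unfolding s_def c_def by (rule sum_on_circle[OF z1 za])
    have key: "z * poly (pderiv R) z = lam * poly Q z * (1 + complex_of_real (c z))"
      unfolding pR zs[symmetric] lam_eq
      by (rule key_algebra[OF q p z0 a0 eqd])
    have c0: "c z \<ge> 0" unfolding c_def
      using asm(2) by (intro sum_list_nonneg) (auto simp: power_le_one)
    have dB: "deriv B z = B z * s z" by (rule DERIV_imp_deriv[OF D])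
    have "z * B z = lam" using h Seq by blast
    then have nB: "norm (B z) = 1" using z1 asm(5) by (metis mult_1 norm_mult)
    have "norm (s z) = norm (z * s z)" using z1 by (simp add: norm_mult)
    also have "\<dots> = c z" using c0 by (simp add: zs)
    finally have "norm (deriv B z) = c z" by (simp add: dB norm_mult nB)
    then show ?thesis using key c0 by simp
  qed
  define Rt where "Rt = pCons 0 R"
  define Sr where "Sr = {w. poly R w = 0}"
  define Z where "Z = {w. poly Rt w = 0}"
  have polyRt: "poly Rt w = w * poly R w" for w by (simp add: Rt_def)
  have pdRt: "poly (pderiv Rt) w = poly R w + w * poly (pderiv R) w" for w
    by (simp add: Rt_def pderiv_pCons)
  have finSr: "finite Sr" unfolding Sr_def by (rule poly_roots_finite[OF Rnz])
  have Zeq: "Z = insert 0 Sr" unfolding Z_def Sr_def by (auto simp: polyRt)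
  have n0Sr: "0 \<notin> Sr" unfolding Sr_def using R0 l0 by simp
  have finZ: "finite Z" using finSr Zeq by simp
  have Rtnz: "Rt \<noteq> 0" using Rnz by (simp add: Rt_def)
  have rsq: "rsquarefree Rt"
    unfolding rsquarefree_roots
  proof (intro allI notI)
    fix w assume hw: "poly Rt w = 0 \<and> poly (pderiv Rt) w = 0"
    show False
    proof (cases "w = 0")
      case True then show False using hw R0 l0 by (simp add: pdRt)
    next
      case False
      then have r: "poly R w = 0" using hw by (simp add: polyRt)
      have "poly (pderiv Rt) w = lam * poly Q w * (1 + complex_of_real (c w))"
        using atroot[OF r] r by (simp add: pdRt)
      moreover have "lam * poly Q w * (1 + complex_of_real (c w)) \<noteq> 0"
      proof -
        have "1 + complex_of_real (c w) \<noteq> 0"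
        proof
          assume "1 + complex_of_real (c w) = 0"
          then have "complex_of_real (1 + c w) = 0" by simp
          then have "1 + c w = 0" by (simp only: of_real_eq_0_iff)
          then show False using atroot[OF r] by simp
        qed
        then show ?thesis using l0 rootQ[OF r] by simp
      qed
      ultimately show False using hw by simp
    qed
  qed
  define lc where "lc = lead_coeff Rt"
  define W where "W = (\<Prod>w\<in>Z. [:-w,1::complex:])"
  have lc0: "lc \<noteq> 0" using Rtnz by (simp add: lc_def)
  have dec: "smult lc W = Rt"
    unfolding lc_def W_def Z_def by (rule complex_poly_decompose_rsquarefree[OF rsq])
  have degW: "degree W = card Z"
    unfolding W_def by (subst degree_prod_sum_eq) auto
  have degRt: "degree Rt = card Z"
    using dec degW lc0 by (metis degree_smult_eq)
  have degR: "degree R = n + 1"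
  proof (rule antisym)
    show "degree R \<le> n + 1"
    proof (rule degree_le, intro allI impI)
      fix i assume i: "n + 1 < i"
      have "coeff P (i - 1) = 0" using bP_monic[of as] asm(3) i
        unfolding P_def by (intro coeff_eq_0) auto
      moreover have "coeff Q i = 0" using bQ_deg[of as] asm(3) i
        unfolding Q_def by (intro coeff_eq_0) auto
      ultimately show "coeff R i = 0" using i
        by (cases i) (auto simp: R_def coeff_pCons)
    qed
  next
    have "coeff P n = 1" using bP_monic[of as] asm(3) unfolding P_def by metis
    moreover have "coeff Q (n + 1) = 0" using bQ_deg[of as] asm(3)
      unfolding Q_def by (intro coeff_eq_0) auto
    ultimately have "coeff R (n + 1) = \<alpha>" by (simp add: R_def)
    then show "n + 1 \<le> degree R" using a0 by (intro le_degree) simp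
  qed
  have cardZ: "card Z = Suc (n + 1)"
    using degRt degR Rnz by (simp add: Rt_def degree_pCons_eq)
  have cardSr: "card Sr = n + 1" using cardZ Zeq finSr n0Sr by simp
  define T where "T = smult lam Q"
  have degT: "degree T \<le> n + 1"
    using bQ_deg[of as] asm(3) unfolding T_def Q_def by (simp add: le_SucI)
  have coeffT: "coeff T (n + 1) = 0"
    using bQ_deg[of as] asm(3) unfolding T_def Q_def by (simp add: coeff_eq_0)
  have lag: "(\<Sum>w\<in>Z. poly T w / poly (pderiv W) w) = 0"
    using lagrange_sum[OF finZ cardZ degT] coeffT unfolding W_def by simp
  have pdW: "poly (pderiv W) w = poly (pderiv Rt) w / lc" for w
    using lc0 by (simp add: dec[symmetric] pderiv_smult)
  have "(\<Sum>w\<in>Z. poly T w / poly (pderiv W) w) = lc * (\<Sum>w\<in>Z. poly T w / poly (pderiv Rt) w)"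
    unfolding pdW sum_distrib_left by (rule sum.cong) (auto simp: field_simps)
  then have sum0: "(\<Sum>w\<in>Z. poly T w / poly (pderiv Rt) w) = 0" using lag lc0 by simp
  have "(\<Sum>w\<in>Z. poly T w / poly (pderiv Rt) w) =
        poly T 0 / poly (pderiv Rt) 0 + (\<Sum>w\<in>Sr. poly T w / poly (pderiv Rt) w)"
    unfolding Zeq using finSr n0Sr by simp
  moreover have "poly T 0 / poly (pderiv Rt) 0 = -1"
    using l0 by (simp add: T_def Q0 pdRt R0)
  ultimately have sum1: "(\<Sum>w\<in>Sr. poly T w / poly (pderiv Rt) w) = 1"
    using sum0 by simp
  have termeq: "complex_of_real (1 / (norm (deriv B w) + 1)) = poly T w / poly (pderiv Rt) w"
    if w: "w \<in> Sr" for w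
  proof -
    have r: "poly R w = 0" using w by (simp add: Sr_def)
    have A: "norm (deriv B w) = c w" "c w \<ge> 0"
        "w * poly (pderiv R) w = lam * poly Q w * (1 + complex_of_real (c w))"
      using atroot[OF r] by auto
    have q: "poly Q w \<noteq> 0" by (rule rootQ[OF r])
    have ne: "1 + complex_of_real (c w) \<noteq> 0"
    proof
      assume "1 + complex_of_real (c w) = 0"
      then have "complex_of_real (1 + c w) = 0" by simp
      then have "1 + c w = 0" by (simp only: of_real_eq_0_iff)
      then show False using A by simp
    qed
    have "poly (pderiv Rt) w = lam * poly Q w * (1 + complex_of_real (c w))"
      using A(3) r by (simp add: pdRt)
    then have "poly T w / poly (pderiv Rt) w = 1 / (1 + complex_of_real (c w))"
      using q l0 ne by (simp add: T_def)
    then show ?thesis using A(1) by (simp add: add.commute)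
  qed
  have "complex_of_real (\<Sum>w\<in>Sr. 1 / (norm (deriv B w) + 1)) = 1"
    using sum1 termeq by (simp add: of_real_sum)
  then have sumr: "(\<Sum>w\<in>Sr. 1 / (norm (deriv B w) + 1)) = 1"
    by (simp only: of_real_eq_1_iff)
  have Sr_eq: "{z. z * blaschke \<alpha> as z = lam} = Sr"
    using Seq unfolding B_def Sr_def .
  have sub: "Sr \<subseteq> sphere 0 1" using circ by (auto simp: Sr_def)
  show ?thesis unfolding Sr_eq using cardSr sub sumr unfolding B_def by simp
qed


end
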